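(* Let $IS\in\{\Box,\blacksquare\}$ and let $\tau$ be a correct compositional translation from $\mathrm{SYNCSIMPLE}$ into $\mathrm{LOCKSIMPLE}_{1,IS}$. Then each of the words $\tau(!)$ and $\tau(?)$ either starts with $P_1$ or contains the factor $P_1P_1$ (two consecutive occurrences of $P_1$).
   Context: $\mathrm{SYNCSIMPLE}$: subprocesses $\mathcal{U} ::= \checkmark \mid 0 \mid\, !\mathcal{U} \mid\, ?\mathcal{U}$; processes are finite parallel compositions ($\mid$ associative, commutative, $0$ a unit). Reduction: $!\mathcal{U}_1\mid ?\mathcal{U}_2\mid \mathcal{P}\to \mathcal{U}_1\mid\mathcal{U}_2\mid\mathcal{P}$. Successful: of form $\checkmark\mid\mathcal{P}$; may-convergent: reduces to a successful process; must-convergent: every reachable process is may-convergent. $\mathrm{LOCKSIMPLE}_{k,IS}$ ($IS\in\{\Box,\blacksquare\}^k$, $\Box$ empty, $\blacksquare$ full): subprocesses are words over $\{P_1,T_1,\dots,P_k,T_k\}$ followed by $0$ or $\checkmark$; states $(\mathcal{P},C)$ reduce by $(P_i\mathcal{U}\mid\mathcal{P},C)\to(\mathcal{U}\mid\mathcal{P},C[C_i:=\blacksquare])$ only if $C_i=\Box$, and $(T_i\mathcal{U}\mid\mathcal{P},C)\to(\mathcal{U}\mid\mathcal{P},C[C_i:=\Box])$ always. Success = process contains $\checkmark$; a process $\mathcal{P}$ is may/must-convergent iff the state $(\mathcal{P},IS)$ is. A compositional translation $\tau$ is given by words $\tau(!),\tau(?)$ with $\tau(0)=0$, $\tau(\checkmark)=\checkmark$,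 $\tau(!\mathcal{U})=\tau(!)\tau(\mathcal{U})$, $\tau(?\mathcal{U})=\tau(?)\tau(\mathcal{U})$, $\tau$ commuting with $\mid$; correct = preserves and reflects may- and must-convergence. *)

theory Defs
  imports Main "HOL-Library.Multiset"
begin

datatype ssub = SCheck | SZero | SSnd ssub | SRcv ssub

type_synonym sproc = "ssub multiset"

inductive sstep :: "sproc \<Rightarrow> sproc \<Rightarrow> bool" where
  "sstep (add_mset (SSnd u1) (add_mset (SRcv u2) P)) (add_mset u1 (add_mset u2 P))"

definition ssuccessful :: "sproc \<Rightarrow> bool" where
  "ssuccessful P \<longleftrightarrow> SCheck \<in># P"

definition smay :: "sproc \<Rightarrow> bool" where
  "smay P \<longleftrightarrow> (\<exists>Q. sstep\<^sup>*\<^sup>* P Q \<and> ssuccessful Q)"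

definition smust :: "sproc \<Rightarrow> bool" where
  "smust P \<longleftrightarrow> (\<forall>Q. sstep\<^sup>*\<^sup>* P Q \<longrightarrow> smay Q)"

text \<open>Lock actions P_i, T_i. Lock states: C i = True means full, False means empty.\<close>
datatype lact = LP nat | LT nat

datatype lsub = LCheck | LZero | LAct lact lsub

type_synonym lproc = "lsub multiset"
type_synonym lstate = "lproc \<times> (nat \<Rightarrow> bool)"

inductive lstep :: "lstate \<Rightarrow> lstate \<Rightarrow> bool" where
  lstepP: "\<not> C i \<Longrightarrow> lstep (add_mset (LAct (LP i) u) P, C) (add_mset u P, C(i := True))"
| lstepT: "lstep (add_mset (LAct (LT i) u) P, C) (add_mset u P, C(i := False))"

definition lsuccessful :: "lstate \<Rightarrow> bool" where
  "lsuccessful S \<longleftrightarrow> LCheck \<in># fst S"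

definition lmay_state :: "lstate \<Rightarrow> bool" where
  "lmay_state S \<longleftrightarrow> (\<exists>S'. lstep\<^sup>*\<^sup>* S S' \<and> lsuccessful S')"

definition lmust_state :: "lstate \<Rightarrow> bool" where
  "lmust_state S \<longleftrightarrow> (\<forall>S'. lstep\<^sup>*\<^sup>* S S' \<longrightarrow> lmay_state S')"

definition lmay :: "(nat \<Rightarrow> bool) \<Rightarrow> lproc \<Rightarrow> bool" where
  "lmay IS P \<longleftrightarrow> lmay_state (P, IS)"

definition lmust :: "(nat \<Rightarrow> bool) \<Rightarrow> lproc \<Rightarrow> bool" where
  "lmust IS P \<longleftrightarrow> lmust_state (P, IS)"

definition prefix_word :: "lact list \<Rightarrow> lsub \<Rightarrow> lsub" where
  "prefix_word w u = foldr LAct w u"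

fun tr_sub :: "lact list \<Rightarrow> lact list \<Rightarrow> ssub \<Rightarrow> lsub" where
  "tr_sub ws wr SZero = LZero"
| "tr_sub ws wr SCheck = LCheck"
| "tr_sub ws wr (SSnd u) = prefix_word ws (tr_sub ws wr u)"
| "tr_sub ws wr (SRcv u) = prefix_word wr (tr_sub ws wr u)"

definition tr_proc :: "lact list \<Rightarrow> lact list \<Rightarrow> sproc \<Rightarrow> lproc" where
  "tr_proc ws wr P = image_mset (tr_sub ws wr) P"

definition word_over :: "nat \<Rightarrow> lact list \<Rightarrow> bool" where
  "word_over k w \<longleftrightarrow> (\<forall>a \<in> set w. \<exists>i. 1 \<le> i \<and> i \<le> k \<and> (a = LP i \<or> a = LT i))"

text \<open>Correct translation into LOCKSIMPLE_{k,IS}, given by words tau(!) = ws, tau(?) = wr.\<close>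
definition correct_translation :: "nat \<Rightarrow> (nat \<Rightarrow> bool) \<Rightarrow> lact list \<Rightarrow> lact list \<Rightarrow> bool" where
  "correct_translation k IS ws wr \<longleftrightarrow>
     word_over k ws \<and> word_over k wr \<and>
     (\<forall>P. (smay P \<longleftrightarrow> lmay IS (tr_proc ws wr P)) \<and>
          (smust P \<longleftrightarrow> lmust IS (tr_proc ws wr P)))"

end

theory Submission
  imports Defs
begin

lemma run_word:
  assumes "\<forall>a \<in> set w. a = LP 1 \<or> a = LT 1"
    and "\<not> (\<exists>u v. w = u @ [LP 1, LP 1] @ v)"
    and "(\<exists>rest. w = LP 1 # rest) \<longrightarrow> \<not> C 1"
  shows "\<exists>C'. lstep\<^sup>*\<^sup>* ({#prefix_word w x#}, C) ({#x#}, C')"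
  using assms
proof (induction w arbitrary: C)
  case Nil
  then show ?case by (auto simp: prefix_word_def)
next
  case (Cons a w)
  have nf: "\<not> (\<exists>u v. w = u @ [LP 1, LP 1] @ v)"
  proof
    assume "\<exists>u v. w = u @ [LP 1, LP 1] @ v"
    then obtain u v where "w = u @ [LP 1, LP 1] @ v" by blast
    then have "a # w = (a # u) @ [LP 1, LP 1] @ v" by simp
    then show False using Cons.prems(2) by blast
  qed
  from Cons.prems(1) have "a = LP 1 \<or> a = LT 1" by simp
  then show ?case
  proof
    assume a: "a = LP 1"
    then have "\<not> C 1" using Cons.prems(3) by blast
    then have s: "lstep ({#prefix_word (a # w) x#}, C) ({#prefix_word w x#}, C(1 := True))"
      using a lstepP[of C 1 "prefix_word w x" "{#}"] by (simp add: prefix_word_def)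
    have "\<not> (\<exists>rest. w = LP 1 # rest)"
    proof
      assume "\<exists>rest. w = LP 1 # rest"
      then obtain rest where "w = LP 1 # rest" by blast
      then have "a # w = [] @ [LP 1, LP 1] @ rest" using a by simp
      then show False using Cons.prems(2) by blast
    qed
    then obtain C' where "lstep\<^sup>*\<^sup>* ({#prefix_word w x#}, C(1 := True)) ({#x#}, C')"
      using Cons.IH[of "C(1 := True)", OF _ nf] Cons.prems(1) \<open>\<not> (\<exists>rest. w = LP 1 # rest)\<close> by fastforce
    then show ?case using s by (meson converse_rtranclp_into_rtranclp)
  next
    assume a: "a = LT 1"
    then have s: "lstep ({#prefix_word (a # w) x#}, C) ({#prefix_word w x#}, C(1 := False))"
      using lstepT[of 1 "prefix_word w x" "{#}" C] by (simp add: prefix_word_def)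
    obtain C' where "lstep\<^sup>*\<^sup>* ({#prefix_word w x#}, C(1 := False)) ({#x#}, C')"
      using Cons.IH[of "C(1 := False)", OF _ nf] Cons.prems(1) by fastforce
    then show ?case using s by (meson converse_rtranclp_into_rtranclp)
  qed
qed

lemma no_sstep_single: "\<not> sstep {#u#} Q"
  by (auto elim: sstep.cases)

lemma not_smay_single: "u \<noteq> SCheck \<Longrightarrow> \<not> smay {#u#}"
proof
  assume "u \<noteq> SCheck" "smay {#u#}"
  then obtain Q where "sstep\<^sup>*\<^sup>* {#u#} Q" "ssuccessful Q" unfolding smay_def by blast
  then have "Q = {#u#}" using no_sstep_single by (metis converse_rtranclpE)
  then show False using \<open>ssuccessful Q\<close> \<open>u \<noteq> SCheck\<close> by (simp add: ssuccessful_def)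
qed

lemma word_over1: "word_over 1 w \<Longrightarrow> \<forall>a \<in> set w. a = LP 1 \<or> a = LT 1"
  unfolding word_over_def using le_antisym by blast

lemma lmay_word:
  assumes "word_over 1 w"
    and "\<not> ((\<exists>rest. w = LP 1 # rest) \<or> (\<exists>u v. w = u @ [LP 1, LP 1] @ v))"
  shows "lmay IS {#prefix_word w LCheck#}"
proof -
  obtain C' where "lstep\<^sup>*\<^sup>* ({#prefix_word w LCheck#}, IS) ({#LCheck#}, C')"
    using run_word[OF word_over1[OF assms(1)]] assms(2) by blast
  then show ?thesis unfolding lmay_def lmay_state_def lsuccessful_def by force
qed

theorem lemma3p1:
  fixes IS :: "nat \<Rightarrow> bool" and ws wr :: "lact list"
  assumes "correct_translation 1 IS ws wr"
  shows "\<forall>w \<in> {ws, wr}. (\<exists>rest. w = LP 1 # rest) \<or> (\<exists>u v. w = u @ [LP 1, LP 1] @ v)"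
proof -
  have ow: "word_over 1 ws" "word_over 1 wr"
    and eq: "\<And>P. smay P \<longleftrightarrow> lmay IS (tr_proc ws wr P)"
    using assms unfolding correct_translation_def by auto
  have "(\<exists>rest. ws = LP 1 # rest) \<or> (\<exists>u v. ws = u @ [LP 1, LP 1] @ v)"
  proof (rule ccontr)
    assume "\<not> ?thesis"
    then have "lmay IS {#prefix_word ws LCheck#}" using lmay_word ow by blast
    then have "smay {#SSnd SCheck#}" using eq[of "{#SSnd SCheck#}"] by (simp add: tr_proc_def)
    then show False using not_smay_single by blast
  qed
  moreover have "(\<exists>rest. wr = LP 1 # rest) \<or> (\<exists>u v. wr = u @ [LP 1, LP 1] @ v)"
  proof (rule ccontr)
    assume "\<not> ?thesis"
    then have "lmay IS {#prefix_word wr LCheck#}" using lmay_word ow by blast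
    then have "smay {#SRcv SCheck#}" using eq[of "{#SRcv SCheck#}"] by (simp add: tr_proc_def)
    then show False using not_smay_single by blast
  qed
  ultimately show ?thesis by blast
qed

end
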